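(* For every positive integer $n$, there is a simple coalition game $\mathcal G$ over the $n\times n$ grid graph $R_n$ with $\dfrac{\rho^f(\mathcal G)}{\rho(\mathcal G)}\ge \tfrac12\tau(R_n)$.
   Context: $R_n$ is the grid graph on $\{1,\dots,n\}^2$ with $(i,j)\sim(i',j')$ iff $|i-i'|+|j-j'|=1$. Coalition game over $G=(V,E)$: a valuation $v:2^V\to\mathbb Z_{\ge0}$ with $v(\emptyset)=0$, $v(S)=0$ whenever $G[S]$ is disconnected, $v$ not identically zero; simple if values lie in $\{0,1\}$. $\rho^f(\mathcal G)=\max\{\sum_S v(S)y_S: y\ge0,\ \sum_{S\ni i}y_S\le1\ \forall i\}$, and $\rho(\mathcal G)$ the same maximum over $0/1$ vectors $y$. Thicket number $\tau(G)$: maximum, over collections $\mathcal H$ of nonempty, connected-inducing, pairwise intersecting vertex sets, of the minimum size of a set meeting every member of $\mathcal H$. *)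

theory Defs
  imports Complex_Main
begin

definition induced_connected :: "('a \<Rightarrow> 'a \<Rightarrow> bool) \<Rightarrow> 'a set \<Rightarrow> bool" where
  "induced_connected E S \<longleftrightarrow> S \<noteq> {} \<and>
     (\<forall>x\<in>S. \<forall>y\<in>S. (x, y) \<in> ({(a, b). a \<in> S \<and> b \<in> S \<and> E a b})\<^sup>*)"

definition coalition_game :: "'a set \<Rightarrow> ('a \<Rightarrow> 'a \<Rightarrow> bool) \<Rightarrow> ('a set \<Rightarrow> nat) \<Rightarrow> bool" where
  "coalition_game V E v \<longleftrightarrow> v {} = 0
     \<and> (\<forall>S\<subseteq>V. \<not> induced_connected E S \<longrightarrow> v S = 0)
     \<and> (\<exists>S\<subseteq>V. v S \<noteq> 0)"

definition simple_coalition_game :: "'a set \<Rightarrow> ('a \<Rightarrow> 'a \<Rightarrow> bool) \<Rightarrow> ('a set \<Rightarrow> nat) \<Rightarrow> bool" where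
  "simple_coalition_game V E v \<longleftrightarrow> coalition_game V E v \<and> (\<forall>S\<subseteq>V. v S \<in> {0, 1})"

definition packing_feasible :: "'a set \<Rightarrow> ('a set \<Rightarrow> real) \<Rightarrow> bool" where
  "packing_feasible V y \<longleftrightarrow> (\<forall>S\<subseteq>V. y S \<ge> 0)
     \<and> (\<forall>i\<in>V. (\<Sum>S\<in>{S. S \<subseteq> V \<and> i \<in> S}. y S) \<le> 1)"

definition packing_value :: "'a set \<Rightarrow> ('a set \<Rightarrow> nat) \<Rightarrow> ('a set \<Rightarrow> real) \<Rightarrow> real" where
  "packing_value V v y = (\<Sum>S\<in>Pow V. real (v S) * y S)"

text \<open>Fractional optimum rho^f (a maximum; written as supremum of the bounded LP values).\<close>
definition rho_f :: "'a set \<Rightarrow> ('a set \<Rightarrow> nat) \<Rightarrow> real" where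
  "rho_f V v = Sup {packing_value V v y | y. packing_feasible V y}"

definition rho :: "'a set \<Rightarrow> ('a set \<Rightarrow> nat) \<Rightarrow> real" where
  "rho V v = Max {packing_value V v y | y. packing_feasible V y \<and> (\<forall>S\<subseteq>V. y S \<in> {0, 1})}"

definition thicket :: "'a set \<Rightarrow> ('a \<Rightarrow> 'a \<Rightarrow> bool) \<Rightarrow> 'a set set \<Rightarrow> bool" where
  "thicket V E H \<longleftrightarrow> (\<forall>X\<in>H. X \<subseteq> V \<and> X \<noteq> {} \<and> induced_connected E X)
     \<and> (\<forall>X\<in>H. \<forall>Y\<in>H. X \<inter> Y \<noteq> {})"

definition hitting_number :: "'a set \<Rightarrow> 'a set set \<Rightarrow> nat" where
  "hitting_number V H = Min {card T | T. T \<subseteq> V \<and> (\<forall>X\<in>H. T \<inter> X \<noteq> {})}"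

definition thicket_number :: "'a set \<Rightarrow> ('a \<Rightarrow> 'a \<Rightarrow> bool) \<Rightarrow> nat" where
  "thicket_number V E = Max {hitting_number V H | H. thicket V E H}"

definition grid_V :: "nat \<Rightarrow> (nat \<times> nat) set" where
  "grid_V n = {1..n} \<times> {1..n}"

definition grid_adj :: "nat \<times> nat \<Rightarrow> nat \<times> nat \<Rightarrow> bool" where
  "grid_adj p q \<longleftrightarrow> \<bar>int (fst p) - int (fst q)\<bar> + \<bar>int (snd p) - int (snd q)\<bar> = 1"

end

theory Submission
  imports Defs
begin


definition RR :: "(nat\<times>nat) set \<Rightarrow> ((nat\<times>nat)\<times>(nat\<times>nat)) set" where
  "RR S = {(a, b). a \<in> S \<and> b \<in> S \<and> grid_adj a b}"

lemma side_lemma: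
  assumes "induced_connected grid_adj X" "\<forall>x\<in>X. fst x \<noteq> r"
  shows "(\<forall>x\<in>X. fst x < r) \<or> (\<forall>x\<in>X. fst x > r)"
proof -
  have key: "(fst x < r) = (fst y < r)" if "(x, y) \<in> (RR X)\<^sup>*" for x y
    using that
  proof (induction rule: rtrancl_induct)
    case base then show ?case by simp
  next
    case (step y z)
    then have yz: "y \<in> X" "z \<in> X" "grid_adj y z" by (auto simp: RR_def)
    then have "\<bar>int (fst y) - int (fst z)\<bar> \<le> 1" unfolding grid_adj_def by linarith
    moreover have "fst y \<noteq> r" "fst z \<noteq> r" using yz assms(2) by auto
    ultimately have "(fst y < r) = (fst z < r)" by linarith
    with step show ?case by simp
  qed
  obtain x0 where x0: "x0 \<in> X" using assms(1) unfolding induced_connected_def by auto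
  have "\<forall>x\<in>X. (fst x < r) = (fst x0 < r)"
    using assms(1) x0 key unfolding induced_connected_def RR_def by blast
  then show ?thesis using assms(2) x0 by (metis linorder_neqE_nat)
qed

lemma thicket_row:
  assumes "thicket (grid_V n) grid_adj H" "n \<ge> 1"
  shows "\<exists>r\<in>{1..n}. \<forall>X\<in>H. \<exists>x\<in>X. fst x = r"
proof (rule ccontr)
  assume "\<not> ?thesis"
  then have miss: "\<forall>r\<in>{1..n}. \<exists>X\<in>H. \<forall>x\<in>X. fst x \<noteq> r" by auto
  have mem: "X \<subseteq> grid_V n" "X \<noteq> {}" "induced_connected grid_adj X" if "X \<in> H" for X
    using assms that unfolding thicket_def by auto
  have inter: "X \<inter> Y \<noteq> {}" if "X \<in> H" "Y \<in> H" for X Y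
    using assms that unfolding thicket_def by auto
  define B where "B = {i\<in>{1..n}. \<exists>X\<in>H. \<forall>x\<in>X. fst x > i}"
  have "1 \<in> B"
  proof -
    have "(1::nat) \<in> {1..n}" using assms(2) by simp
    then obtain X where X: "X \<in> H" "\<forall>x\<in>X. fst x \<noteq> 1" using miss by blast
    have "\<forall>x\<in>X. fst x > 1"
    proof
      fix x assume "x \<in> X"
      then have "fst x \<ge> 1" using mem(1)[OF X(1)] by (auto simp: grid_V_def)
      then show "fst x > 1" using X(2) \<open>x \<in> X\<close> by fastforce
    qed
    then show ?thesis using X assms(2) by (auto simp: B_def)
  qed
  have fin: "finite B" by (simp add: B_def)
  define i where "i = Max B"
  have iB: "i \<in> B" using fin \<open>1 \<in> B\<close> i_def Max_in by blast
  then obtain X where X: "X \<in> H" "\<forall>x\<in>X. fst x > i" and i1: "i \<ge> 1" "i \<le> n" by (auto simp: B_def)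
  obtain x where "x \<in> X" using mem(2)[OF X(1)] by auto
  then have "fst x \<le> n" using mem(1)[OF X(1)] by (auto simp: grid_V_def)
  then have "i < n" using X(2) \<open>x \<in> X\<close> by fastforce
  then have "Suc i \<in> {1..n}" by simp
  then obtain Y where Y: "Y \<in> H" "\<forall>y\<in>Y. fst y \<noteq> Suc i" using miss by blast
  from side_lemma[OF mem(3)[OF Y(1)] Y(2)]
  have "(\<forall>y\<in>Y. fst y < Suc i) \<or> (\<forall>y\<in>Y. fst y > Suc i)" .
  moreover have "\<not> (\<forall>y\<in>Y. fst y > Suc i)"
  proof
    assume "\<forall>y\<in>Y. fst y > Suc i"
    then have "Suc i \<in> B" using Y \<open>i < n\<close> by (auto simp: B_def)
    then have "Suc i \<le> i" using fin i_def by simp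
    then show False by simp
  qed
  ultimately have "\<forall>y\<in>Y. fst y < Suc i" by blast
  then have "X \<inter> Y = {}" using X(2) by fastforce
  then show False using inter X(1) Y(1) by blast
qed

lemma thicket_bound:
  assumes "n \<ge> 1"
  shows "thicket_number (grid_V n) grid_adj \<le> n"
proof -
  have hb: "hitting_number (grid_V n) H \<le> n" if th: "thicket (grid_V n) grid_adj H" for H
  proof -
    obtain r where r: "r \<in> {1..n}" "\<forall>X\<in>H. \<exists>x\<in>X. fst x = r"
      using thicket_row[OF th assms] by blast
    define T where "T = {r} \<times> {1..n}"
    have "X \<subseteq> grid_V n" if "X \<in> H" for X using \<open>thicket _ _ H\<close> that unfolding thicket_def by auto
    then have hit: "\<forall>X\<in>H. T \<inter> X \<noteq> {}" using r unfolding T_def grid_V_def by fastforce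
    have sub: "T \<subseteq> grid_V n" using r unfolding T_def grid_V_def by auto
    have cT: "card T = n" unfolding T_def by simp
    have fin: "finite {card T | T. T \<subseteq> grid_V n \<and> (\<forall>X\<in>H. T \<inter> X \<noteq> {})}"
    proof -
      have "{card T | T. T \<subseteq> grid_V n \<and> (\<forall>X\<in>H. T \<inter> X \<noteq> {})} \<subseteq> card ` Pow (grid_V n)" by auto
      moreover have "finite (grid_V n)" by (simp add: grid_V_def)
      ultimately show ?thesis using finite_subset by blast
    qed
    have "n \<in> {card T | T. T \<subseteq> grid_V n \<and> (\<forall>X\<in>H. T \<inter> X \<noteq> {})}" using hit sub cT by blast
    then show ?thesis unfolding hitting_number_def using fin Min_le by blast
  qed
  have fin: "finite {hitting_number (grid_V n) H | H. thicket (grid_V n) grid_adj H}"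
  proof (rule finite_subset[of _ "{..n}"])
    show "{hitting_number (grid_V n) H | H. thicket (grid_V n) grid_adj H} \<subseteq> {..n}"
      using hb by blast
  qed simp

  have ne: "{hitting_number (grid_V n) H | H. thicket (grid_V n) grid_adj H} \<noteq> {}"
  proof -
    have "thicket (grid_V n) grid_adj {}" by (simp add: thicket_def)
    then show ?thesis by blast
  qed
  have "\<forall>a\<in>{hitting_number (grid_V n) H | H. thicket (grid_V n) grid_adj H}. a \<le> n"
    using hb by blast
  then show ?thesis unfolding thicket_number_def using fin ne Max_le_iff by blast
qed


definition cross :: "nat \<Rightarrow> nat \<Rightarrow> nat \<Rightarrow> (nat\<times>nat) set" where
  "cross n a b = {p \<in> grid_V n. fst p = a \<or> snd p = b}"

definition crosses :: "nat \<Rightarrow> (nat\<times>nat) set set" where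
  "crosses n = (\<lambda>(a,b). cross n a b) ` ({1..n}\<times>{1..n})"

lemma chain:
  "(\<forall>k. lo \<le> k \<and> k < hi \<longrightarrow> (f k, f (Suc k)) \<in> r) \<Longrightarrow> lo \<le> hi \<Longrightarrow> (f lo, f hi) \<in> r\<^sup>*"
proof (induction hi)
  case 0 then show ?case by simp
next
  case (Suc hi)
  show ?case
  proof (cases "lo = Suc hi")
    case True then show ?thesis by simp
  next
    case False
    then have "lo \<le> hi" using Suc.prems by simp
    then have "(f lo, f hi) \<in> r\<^sup>*" using Suc by simp
    moreover have "(f hi, f (Suc hi)) \<in> r" using Suc.prems \<open>lo \<le> hi\<close> by simp
    ultimately show ?thesis by simp
  qed
qed

lemma sym_RR: "sym (RR S)"
  unfolding sym_def RR_def grid_adj_def by auto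

lemma row_path0:
  assumes "a \<in> {1..n}" "j \<in> {1..n}" "j' \<in> {1..n}" "j \<le> j'"
  shows "((a,j),(a,j')) \<in> (RR (cross n a b))\<^sup>*"
proof -
  have "\<forall>k. j \<le> k \<and> k < j' \<longrightarrow> ((\<lambda>k. (a,k)) k, (\<lambda>k. (a,k)) (Suc k)) \<in> RR (cross n a b)"
    using assms unfolding RR_def cross_def grid_V_def grid_adj_def by auto
  from chain[OF this assms(4)] show ?thesis by simp
qed

lemma row_path:
  assumes "a \<in> {1..n}" "j \<in> {1..n}" "j' \<in> {1..n}"
  shows "((a,j),(a,j')) \<in> (RR (cross n a b))\<^sup>*"
proof (cases "j \<le> j'")
  case True then show ?thesis using row_path0 assms by blast
next
  case False
  then have "((a,j'),(a,j)) \<in> (RR (cross n a b))\<^sup>*" using row_path0 assms by simp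
  then show ?thesis using sym_rtrancl[OF sym_RR] by (meson symD)
qed

lemma col_path0:
  assumes "b \<in> {1..n}" "j \<in> {1..n}" "j' \<in> {1..n}" "j \<le> j'"
  shows "((j,b),(j',b)) \<in> (RR (cross n a b))\<^sup>*"
proof -
  have "\<forall>k. j \<le> k \<and> k < j' \<longrightarrow> ((\<lambda>k. (k,b)) k, (\<lambda>k. (k,b)) (Suc k)) \<in> RR (cross n a b)"
    using assms unfolding RR_def cross_def grid_V_def grid_adj_def by auto
  from chain[OF this assms(4)] show ?thesis by simp
qed

lemma col_path:
  assumes "b \<in> {1..n}" "j \<in> {1..n}" "j' \<in> {1..n}"
  shows "((j,b),(j',b)) \<in> (RR (cross n a b))\<^sup>*"
proof (cases "j \<le> j'")
  case True then show ?thesis using col_path0 assms by blast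
next
  case False
  then have "((j',b),(j,b)) \<in> (RR (cross n a b))\<^sup>*" using col_path0 assms by simp
  then show ?thesis using sym_rtrancl[OF sym_RR] by (meson symD)
qed

lemma to_center:
  assumes "a \<in> {1..n}" "b \<in> {1..n}" "p \<in> cross n a b"
  shows "(p, (a,b)) \<in> (RR (cross n a b))\<^sup>*"
proof -
  obtain i j where p: "p = (i,j)" by (cases p)
  have ij: "i \<in> {1..n}" "j \<in> {1..n}" using assms(3) p by (auto simp: cross_def grid_V_def)
  have "i = a \<or> j = b" using assms(3) p by (auto simp: cross_def)
  then show ?thesis
  proof
    assume "i = a" then show ?thesis using row_path[OF assms(1) ij(2) assms(2)] p by simp
  next
    assume "j = b" then show ?thesis using col_path[OF assms(2) ij(1) assms(1)] p by simp
  qed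
qed

lemma cross_conn:
  assumes "a \<in> {1..n}" "b \<in> {1..n}"
  shows "induced_connected grid_adj (cross n a b)"
proof -
  have c: "(a,b) \<in> cross n a b" using assms by (auto simp: cross_def grid_V_def)
  have "(x, y) \<in> (RR (cross n a b))\<^sup>*" if "x \<in> cross n a b" "y \<in> cross n a b" for x y
  proof -
    have "(x,(a,b)) \<in> (RR (cross n a b))\<^sup>*" using to_center assms that by blast
    moreover have "(y,(a,b)) \<in> (RR (cross n a b))\<^sup>*" using to_center assms that by blast
    then have "((a,b),y) \<in> (RR (cross n a b))\<^sup>*" using sym_rtrancl[OF sym_RR] by (meson symD)
    ultimately show ?thesis by simp
  qed
  then show ?thesis using c unfolding induced_connected_def RR_def by blast
qed

lemma crosses_conn: "S \<in> crosses n \<Longrightarrow> induced_connected grid_adj S"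
  unfolding crosses_def using cross_conn by auto

lemma crosses_sub: "S \<in> crosses n \<Longrightarrow> S \<subseteq> grid_V n"
  unfolding crosses_def cross_def by auto

lemma crosses_meet: "S \<in> crosses n \<Longrightarrow> T \<in> crosses n \<Longrightarrow> S \<inter> T \<noteq> {}"
proof -
  assume "S \<in> crosses n" "T \<in> crosses n"
  then obtain a b a' b' where "S = cross n a b" "T = cross n a' b'" "a \<in> {1..n}" "b' \<in> {1..n}"
    unfolding crosses_def by auto
  then have "(a,b') \<in> S \<inter> T" by (auto simp: cross_def grid_V_def)
  then show ?thesis by blast
qed

lemma cross_inj: "inj_on (\<lambda>(a,b). cross n a b) ({1..n}\<times>{1..n})"
proof (cases "n \<ge> 2")
  case False
  then have "{1..n}\<times>{1..n} \<subseteq> {(1::nat,1::nat)}" by auto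
  then show ?thesis by (intro inj_onI) (metis singletonD subsetD)
next
  case True
  show ?thesis
  proof (rule inj_onI, clarify)
    fix a b a' b'
    assume ab: "a \<in> {1..n}" "b \<in> {1..n}" "a' \<in> {1..n}" "b' \<in> {1..n}"
      and eq: "cross n a b = cross n a' b'"
    have "\<exists>k\<in>{1..n}. k \<noteq> b'" using True by (intro bexI[of _ "if b' = 1 then 2 else 1"]) auto
    then obtain k where k: "k \<in> {1..n}" "k \<noteq> b'" by blast
    have "(a,k) \<in> cross n a b" using ab k by (auto simp: cross_def grid_V_def)
    then have "(a,k) \<in> cross n a' b'" using eq by simp
    then have aa: "a = a'" using k(2) by (simp add: cross_def)
    have "\<exists>r\<in>{1..n}. r \<noteq> a" using True by (intro bexI[of _ "if a = 1 then 2 else 1"]) auto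
    then obtain r where r: "r \<in> {1..n}" "r \<noteq> a" by blast
    have "(r,b) \<in> cross n a b" using ab r by (auto simp: cross_def grid_V_def)
    then have "(r,b) \<in> cross n a' b'" using eq by simp
    then have "b = b'" using r(2) aa by (simp add: cross_def)
    then show "a = a' \<and> b = b'" using aa by simp
  qed
qed

lemma card_crosses: "card (crosses n) = n * n"
  unfolding crosses_def using cross_inj by (simp add: card_image)



definition vg :: "nat \<Rightarrow> (nat\<times>nat) set \<Rightarrow> nat" where
  "vg n S = (if S \<in> crosses n then 1 else 0)"

lemma cross11: "n \<ge> 1 \<Longrightarrow> cross n 1 1 \<in> crosses n"
  unfolding crosses_def by force

lemma crosses_ne: "S \<in> crosses n \<Longrightarrow> S \<noteq> {}"
  using crosses_meet by blast

lemma simple: "n \<ge> 1 \<Longrightarrow> simple_coalition_game (grid_V n) grid_adj (vg n)"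
  unfolding simple_coalition_game_def coalition_game_def
proof (intro conjI)
  assume n: "n \<ge> 1"
  show "vg n {} = 0" using crosses_ne by (auto simp: vg_def)
  show "\<forall>S\<subseteq>grid_V n. \<not> induced_connected grid_adj S \<longrightarrow> vg n S = 0"
    using crosses_conn by (auto simp: vg_def)
  show "\<exists>S\<subseteq>grid_V n. vg n S \<noteq> 0"
    using cross11[OF n] crosses_sub by (auto simp: vg_def)
  show "\<forall>S\<subseteq>grid_V n. vg n S \<in> {0, 1}" by (simp add: vg_def)
qed

lemma finV: "finite (grid_V n)" by (simp add: grid_V_def)

lemma int_value:
  assumes feas: "packing_feasible (grid_V n) y" and b: "\<forall>S\<subseteq>grid_V n. y S \<in> {0, 1}"
  shows "packing_value (grid_V n) (vg n) y \<in> {0, 1}"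
proof -
  define V where "V = grid_V n"
  define K where "K = {S \<in> Pow V. S \<in> crosses n \<and> y S = 1}"
  have finK: "finite K" unfolding K_def V_def using finV by simp
  have "packing_value V (vg n) y = (\<Sum>S\<in>Pow V. if S \<in> crosses n \<and> y S = 1 then 1 else 0)"
    unfolding packing_value_def
  proof (rule sum.cong)
    fix S assume "S \<in> Pow V"
    then have "y S \<in> {0,1}" using b V_def by auto
    then show "real (vg n S) * y S = (if S \<in> crosses n \<and> y S = 1 then 1 else 0)"
      by (auto simp: vg_def)
  qed simp
  also have "\<dots> = (\<Sum>S\<in>K. 1)" unfolding K_def
    by (subst sum.inter_filter) (auto simp: V_def finV)
  also have "\<dots> = real (card K)" by simp
  finally have pv: "packing_value V (vg n) y = real (card K)" .
  have "\<forall>S1\<in>K. \<forall>S2\<in>K. S1 = S2"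
  proof (intro ballI, rule ccontr)
    fix S1 S2 assume s: "S1 \<in> K" "S2 \<in> K" "S1 \<noteq> S2"
    then have c: "S1 \<in> crosses n" "S2 \<in> crosses n" "S1 \<subseteq> V" "S2 \<subseteq> V" "y S1 = 1" "y S2 = 1"
      unfolding K_def by auto
    obtain i where i: "i \<in> S1" "i \<in> S2" using crosses_meet[OF c(1,2)] by blast
    then have iV: "i \<in> V" using c by auto
    let ?A = "{S. S \<subseteq> V \<and> i \<in> S}"
    have finA: "finite ?A" using finV V_def by simp
    have sub: "{S1, S2} \<subseteq> ?A" using c i by auto
    have nn: "\<forall>S\<in>?A. 0 \<le> y S" using feas unfolding packing_feasible_def V_def by auto
    have "(\<Sum>S\<in>{S1,S2}. y S) \<le> (\<Sum>S\<in>?A. y S)"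
      using sum_mono2[OF finA sub] nn by blast
    moreover have "(\<Sum>S\<in>{S1,S2}. y S) = 2" using s(3) c by simp
    moreover have "(\<Sum>S\<in>?A. y S) \<le> 1" using feas iV unfolding packing_feasible_def V_def by auto
    ultimately show False by simp
  qed
  then have "card K \<le> 1" using card_le_Suc0_iff_eq[OF finK] by simp
  then have "card K = 0 \<or> card K = 1" by auto
  then show ?thesis using pv V_def by auto
qed

lemma one_value:
  assumes n: "n \<ge> 1"
  shows "packing_value (grid_V n) (vg n) (\<lambda>S. if S = cross n 1 1 then 1 else 0) = 1"
    and "packing_feasible (grid_V n) (\<lambda>S. if S = cross n 1 1 then 1 else 0)"
proof -
  have C: "cross n 1 1 \<in> crosses n" "cross n 1 1 \<subseteq> grid_V n" using cross11[OF n] crosses_sub by auto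
  have "packing_value (grid_V n) (vg n) (\<lambda>S. if S = cross n 1 1 then 1 else 0)
      = (\<Sum>S\<in>Pow (grid_V n). if S = cross n 1 1 then real (vg n (cross n 1 1)) else 0)"
    unfolding packing_value_def by (rule sum.cong) auto
  also have "\<dots> = 1" using C finV by (subst sum.delta) (auto simp: vg_def)
  finally show "packing_value (grid_V n) (vg n) (\<lambda>S. if S = cross n 1 1 then 1 else 0) = 1" .
  show "packing_feasible (grid_V n) (\<lambda>S. if S = cross n 1 1 then 1 else 0)"
    unfolding packing_feasible_def
  proof (intro conjI ballI allI impI)
    fix i assume "i \<in> grid_V n"
    have "(\<Sum>S\<in>{S. S \<subseteq> grid_V n \<and> i \<in> S}. if S = cross n 1 1 then 1 else 0 :: real)
       = (if cross n 1 1 \<in> {S. S \<subseteq> grid_V n \<and> i \<in> S} then 1 else 0)"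
      using finV by (subst sum.delta) auto
    then show "(\<Sum>S\<in>{S. S \<subseteq> grid_V n \<and> i \<in> S}. if S = cross n 1 1 then 1 else 0 :: real) \<le> 1"
      by simp
  qed simp
qed

lemma rho_one:
  assumes n: "n \<ge> 1"
  shows "rho (grid_V n) (vg n) = 1"
  unfolding rho_def
proof (rule Max_eqI)
  let ?A = "{packing_value (grid_V n) (vg n) y |y. packing_feasible (grid_V n) y \<and> (\<forall>S\<subseteq>grid_V n. y S \<in> {0, 1})}"
  have "?A \<subseteq> {0,1}" using int_value by blast
  then show "finite ?A" using finite_subset by blast
  show "y \<le> 1" if "y \<in> ?A" for y using \<open>?A \<subseteq> {0,1}\<close> that by auto
  show "1 \<in> ?A" using one_value[OF n] by (intro CollectI exI[of _ "\<lambda>S. if S = cross n 1 1 then 1 else 0"]) auto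
qed



lemma value_bound:
  assumes feas: "packing_feasible (grid_V n) y"
  shows "packing_value (grid_V n) (vg n) y \<le> real (card (Pow (grid_V n)))"
proof -
  have "real (vg n S) * y S \<le> 1" if S: "S \<in> Pow (grid_V n)" for S
  proof (cases "S \<in> crosses n")
    case False then show ?thesis by (simp add: vg_def)
  next
    case True
    then obtain i where i: "i \<in> S" using crosses_ne by blast
    then have iV: "i \<in> grid_V n" using S by auto
    let ?A = "{S. S \<subseteq> grid_V n \<and> i \<in> S}"
    have finA: "finite ?A" using finV by simp
    have nn: "\<forall>S\<in>?A. 0 \<le> y S" using feas unfolding packing_feasible_def by auto
    have "y S \<le> (\<Sum>S\<in>?A. y S)" using member_le_sum[of S ?A y] finA nn S i by auto
    also have "\<dots> \<le> 1" using feas iV unfolding packing_feasible_def by auto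
    finally show ?thesis using True by (simp add: vg_def)
  qed
  then show ?thesis unfolding packing_value_def using sum_bounded_above[of "Pow (grid_V n)" "\<lambda>S. real (vg n S) * y S" 1]
    by simp
qed

lemma card_through:
  assumes n: "n \<ge> 1" and i: "i \<in> grid_V n"
  shows "card {S \<in> crosses n. i \<in> S} \<le> 2 * n - 1"
proof -
  obtain p q where pq: "i = (p,q)" by (cases i)
  have p: "p \<in> {1..n}" and q: "q \<in> {1..n}" using i pq by (auto simp: grid_V_def)
  define P where "P = ({p} \<times> {1..n}) \<union> (({1..n} - {p}) \<times> {q})"
  have sub: "{S \<in> crosses n. i \<in> S} \<subseteq> (\<lambda>(a,b). cross n a b) ` P"
  proof
    fix S assume "S \<in> {S \<in> crosses n. i \<in> S}"
    then obtain a b where ab: "a \<in> {1..n}" "b \<in> {1..n}" "S = cross n a b" "i \<in> S"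
      unfolding crosses_def by auto
    then have "p = a \<or> q = b" using pq by (auto simp: cross_def)
    then have "(a,b) \<in> P" using ab unfolding P_def by auto
    then show "S \<in> (\<lambda>(a,b). cross n a b) ` P" using ab by force
  qed
  have finP: "finite P" unfolding P_def by simp
  have "card P \<le> card ({p} \<times> {1..n}) + card (({1..n} - {p}) \<times> {q})"
    unfolding P_def by (rule card_Un_le)
  also have "\<dots> = n + (n - 1)" using p by (simp add: card_cartesian_product)
  also have "\<dots> = 2 * n - 1" using n by simp
  finally have cP: "card P \<le> 2 * n - 1" .
  have "card {S \<in> crosses n. i \<in> S} \<le> card ((\<lambda>(a,b). cross n a b) ` P)"
    using sub finP by (intro card_mono) auto
  also have "\<dots> \<le> card P" by (rule card_image_le[OF finP])
  finally show ?thesis using cP by simp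
qed

lemma rho_f_bound:
  assumes n: "n \<ge> 1"
  shows "rho_f (grid_V n) (vg n) \<ge> real n / 2"
proof -
  define c :: real where "c = 1 / real (2 * n - 1)"
  have c_pos: "c > 0" using n by (simp add: c_def)
  define y where "y = (\<lambda>S. if S \<in> crosses n then c else 0)"
  have feas: "packing_feasible (grid_V n) y"
    unfolding packing_feasible_def
  proof (intro conjI ballI allI impI)
    fix S show "0 \<le> y S" using c_pos by (simp add: y_def)
  next
    fix i assume i: "i \<in> grid_V n"
    have "(\<Sum>S\<in>{S. S \<subseteq> grid_V n \<and> i \<in> S}. y S) = (\<Sum>S\<in>{S \<in> {S. S \<subseteq> grid_V n \<and> i \<in> S}. S \<in> crosses n}. c)"
      unfolding y_def using finV by (subst sum.inter_filter) auto
    also have "{S \<in> {S. S \<subseteq> grid_V n \<and> i \<in> S}. S \<in> crosses n} = {S \<in> crosses n. i \<in> S}"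
      using crosses_sub by auto
    also have "(\<Sum>S\<in>{S \<in> crosses n. i \<in> S}. c) = real (card {S \<in> crosses n. i \<in> S}) * c" by simp
    also have "\<dots> \<le> real (2 * n - 1) * c"
      using card_through[OF n i] c_pos by (intro mult_right_mono) auto
    also have "\<dots> = 1" using n by (simp add: c_def)
    finally show "(\<Sum>S\<in>{S. S \<subseteq> grid_V n \<and> i \<in> S}. y S) \<le> 1" .
  qed
  have "packing_value (grid_V n) (vg n) y = (\<Sum>S\<in>Pow (grid_V n). if S \<in> crosses n then c else 0)"
    unfolding packing_value_def by (rule sum.cong) (auto simp: y_def vg_def)
  also have "\<dots> = (\<Sum>S\<in>{S \<in> Pow (grid_V n). S \<in> crosses n}. c)"
    using finV by (subst sum.inter_filter) auto
  also have "{S \<in> Pow (grid_V n). S \<in> crosses n} = crosses n" using crosses_sub by auto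
  also have "(\<Sum>S\<in>crosses n. c) = real (n * n) * c" using card_crosses by simp
  finally have pv: "packing_value (grid_V n) (vg n) y = real (n * n) * c" .
  have "real n / 2 \<le> real (n * n) * c"
  proof -
    have e: "real (2 * n - 1) = 2 * real n - 1" using n by (simp add: of_nat_diff)
    have pos: "2 * real n - 1 > 0" using n by simp
    have "real n * (2 * real n - 1) \<le> 2 * (real n * real n)" by (simp add: algebra_simps)
    then have "real n / 2 \<le> real n * real n / (2 * real n - 1)"
      using pos by (simp add: field_simps)
    then show ?thesis unfolding c_def e by simp
  qed
  also have "\<dots> \<le> rho_f (grid_V n) (vg n)"
    unfolding rho_f_def
  proof (rule cSup_upper)
    show "real (n * n) * c \<in> {packing_value (grid_V n) (vg n) y |y. packing_feasible (grid_V n) y}"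
    proof -
      have "packing_value (grid_V n) (vg n) y \<in> {packing_value (grid_V n) (vg n) y |y. packing_feasible (grid_V n) y}"
        using feas by blast
      then show ?thesis using pv by simp
    qed
    show "bdd_above {packing_value (grid_V n) (vg n) y |y. packing_feasible (grid_V n) y}"
    proof (rule bdd_aboveI)
      fix x assume "x \<in> {packing_value (grid_V n) (vg n) y |y. packing_feasible (grid_V n) y}"
      then obtain z where "x = packing_value (grid_V n) (vg n) z" "packing_feasible (grid_V n) z" by blast
      then show "x \<le> real (card (Pow (grid_V n)))" using value_bound by simp
    qed
  qed
  finally show ?thesis .
qed

theorem lemma5p2:
  fixes n :: nat
  assumes "n \<ge> 1"
  shows "\<exists>v. simple_coalition_game (grid_V n) grid_adj v \<and>
           rho_f (grid_V n) v / rho (grid_V n) v \<ge> real (thicket_number (grid_V n) grid_adj) / 2"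
proof (intro exI conjI)
  show "simple_coalition_game (grid_V n) grid_adj (vg n)" using simple[OF assms] .
  have "real (thicket_number (grid_V n) grid_adj) / 2 \<le> real n / 2"
    using thicket_bound[OF assms] by simp
  also have "\<dots> \<le> rho_f (grid_V n) (vg n) / rho (grid_V n) (vg n)"
    using rho_f_bound[OF assms] rho_one[OF assms] by simp
  finally show "real (thicket_number (grid_V n) grid_adj) / 2 \<le> rho_f (grid_V n) (vg n) / rho (grid_V n) (vg n)" .
qed

end
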